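(* Let $O$ be a Hermitian operator on $n$ qubits and, for each parameter vector $\boldsymbol{\theta}$, let $\rho(\boldsymbol{\theta})$ be the noise-free output state with cost $C(\boldsymbol{\theta})=\mathrm{Tr}[\rho(\boldsymbol{\theta})O]$. Suppose the circuit contains $L$ instances of global depolarizing noise with error probability $s$, so that the noisy cost is $\widetilde{C}(\boldsymbol{\theta},s)=\mathrm{Tr}[((1-s)^L\rho(\boldsymbol{\theta})+(1-(1-s)^L)\mathbb{I}/2^n)O]$. Fix a base error probability $p\in[0,1)$ and a boost factor $a_1>1$ with $a_1p\le1$, and consider a Zero Noise Extrapolation estimator with two noise levels of the form $$C_m(\boldsymbol{\theta})=\frac{A\,\widetilde{C}(\boldsymbol{\theta},p)-B\,\widetilde{C}(\boldsymbol{\theta},a_1p)}{D}+E,$$ with real constants $A,B,D,E$ independent of $\boldsymbol{\theta}$, $D\neq0$, whose ratio $c=A/B$ is: $c=a_1$ for Richardson extrapolation; $c=a_1 r(\varepsilon)^{t(\varepsilon)}/r(a_1\varepsilon)^{t(a_1\varepsilon)}$ for exponential extrapolation (with $r,t$ the positive functions of the noise level appearing in the exponential noise model and $\varepsilon$ the base noise level); and $c=a_1^{-(L+1)}$ for NIBP extrapolation. Assume $C_m$ is estimated from independent estimates of $\widetilde{C}(\boldsymbol{\theta},p)$ and $\widetilde{C}(\boldsymbol{\theta},a_1p)$, so that $\mathrm{Var}[C_m(\boldsymbol{\theta})]=(A^2\mathrm{Var}[\widetilde{C}(\boldsymbol{\theta},p)]+B^2\mathrm{Var}[\widetilde{C}(\boldsymbol{\theta},a_1p)])/D^2$,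 and that $\mathrm{Var}[\widetilde{C}(\boldsymbol{\theta},a_1p)]\ge\mathrm{Var}[\widetilde{C}(\boldsymbol{\theta},p)]$ for all $\boldsymbol{\theta}$. For two parameter vectors $\boldsymbol{\theta}_1,\boldsymbol{\theta}_2$ with $C(\boldsymbol{\theta}_1)\ne C(\boldsymbol{\theta}_2)$, let $\chi_{depol}$ be the relative resolvability of these two points. Then $$\chi_{depol}\le\frac{\Big(c-\frac{(1-a_1p)^L}{(1-p)^L}\Big)^2}{c^2+1},$$ and consequently $\chi_{depol}\le1$ for each of the three extrapolation strategies.
   Context: The error mitigation cost is $\gamma=\mathrm{Var}[C_m(\boldsymbol{\theta})]/\mathrm{Var}[\widetilde{C}(\boldsymbol{\theta},p)]$ (evaluated at either point). The relative resolvability of two points is $\chi=\frac{1}{\gamma}\Big(\frac{\Delta C_m}{\Delta\widetilde{C}}\Big)^2$, where $\Delta C_m=C_m(\boldsymbol{\theta}_1)-C_m(\boldsymbol{\theta}_2)$ and $\Delta\widetilde{C}=\widetilde{C}(\boldsymbol{\theta}_1,p)-\widetilde{C}(\boldsymbol{\theta}_2,p)$; it is the ratio of the number of shots needed to resolve the two points to fixed precision without and with mitigation. *)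

theory Defs
  imports Complex_Main "Jordan_Normal_Form.Matrix"
begin

definition mtrace :: "complex mat \<Rightarrow> complex" where
  "mtrace A = (\<Sum>i<dim_row A. A $$ (i, i))"

definition hermitian_on :: "nat \<Rightarrow> complex mat \<Rightarrow> bool" where
  "hermitian_on n Ob \<longleftrightarrow> Ob \<in> carrier_mat (2^n) (2^n) \<and>
     (\<forall>i<2^n. \<forall>j<2^n. Ob $$ (i, j) = cnj (Ob $$ (j, i)))"

definition density_op :: "nat \<Rightarrow> complex mat \<Rightarrow> bool" where
  "density_op n \<rho> \<longleftrightarrow> hermitian_on n \<rho> \<and> mtrace \<rho> = 1 \<and>
     (\<forall>v :: nat \<Rightarrow> complex.
        0 \<le> Re (\<Sum>i<2^n. \<Sum>j<2^n. cnj (v i) * \<rho> $$ (i, j) * v j))"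

text \<open>Cost Tr[rho Ob] (real for Hermitian rho, Ob).\<close>
definition cost :: "complex mat \<Rightarrow> complex mat \<Rightarrow> real" where
  "cost \<rho> Ob = Re (mtrace (\<rho> * Ob))"

definition depol_state :: "nat \<Rightarrow> nat \<Rightarrow> real \<Rightarrow> complex mat \<Rightarrow> complex mat" where
  "depol_state n L s \<rho> =
     complex_of_real ((1 - s) ^ L) \<cdot>\<^sub>m \<rho> +
     complex_of_real ((1 - (1 - s) ^ L) / 2 ^ n) \<cdot>\<^sub>m 1\<^sub>m (2 ^ n)"

definition noisy_cost :: "nat \<Rightarrow> nat \<Rightarrow> real \<Rightarrow> complex mat \<Rightarrow> complex mat \<Rightarrow> real" where
  "noisy_cost n L s \<rho> Ob = cost (depol_state n L s \<rho>) Ob"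

definition mitigation_cost :: "real \<Rightarrow> real \<Rightarrow> real" where
  "mitigation_cost var_mit var_noisy = var_mit / var_noisy"

definition rel_resolvability :: "real \<Rightarrow> real \<Rightarrow> real \<Rightarrow> real" where
  "rel_resolvability \<gamma> dCm dCt = (1 / \<gamma>) * (dCm / dCt)^2"

end

theory Submission
  imports Defs
begin

lemma tr_lin:
  assumes "R \<in> carrier_mat N N" "Ob \<in> carrier_mat N N"
  shows "mtrace ((a \<cdot>\<^sub>m R + b \<cdot>\<^sub>m 1\<^sub>m N) * Ob) = a * mtrace (R * Ob) + b * mtrace Ob"
proof -
  have "(a \<cdot>\<^sub>m R + b \<cdot>\<^sub>m 1\<^sub>m N) * Ob = a \<cdot>\<^sub>m (R * Ob) + b \<cdot>\<^sub>m Ob"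
  proof -
    have "(a \<cdot>\<^sub>m R + b \<cdot>\<^sub>m 1\<^sub>m N) * Ob = (a \<cdot>\<^sub>m R) * Ob + (b \<cdot>\<^sub>m 1\<^sub>m N) * Ob"
      using assms by (intro add_mult_distrib_mat) auto
    also have "\<dots> = a \<cdot>\<^sub>m (R * Ob) + b \<cdot>\<^sub>m (1\<^sub>m N * Ob)"
      using assms by (simp add: mult_smult_assoc_mat[of _ N N])
    also have "\<dots> = a \<cdot>\<^sub>m (R * Ob) + b \<cdot>\<^sub>m Ob" using left_mult_one_mat[OF assms(2)] by (simp only:)
    finally show ?thesis .
  qed
  moreover have "mtrace (a \<cdot>\<^sub>m (R * Ob) + b \<cdot>\<^sub>m Ob) = a * mtrace (R * Ob) + b * mtrace Ob"
    using assms unfolding mtrace_def by (simp add: sum.distrib sum_distrib_left)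
  ultimately show ?thesis by simp
qed

lemma cost_lin:
  assumes "density_op n R" "hermitian_on n Ob"
  shows "noisy_cost n L s R Ob = (1-s)^L * cost R Ob + (1 - (1 - s) ^ L) / 2 ^ n * Re (mtrace Ob)"
proof -
  have "R \<in> carrier_mat (2^n) (2^n)" "Ob \<in> carrier_mat (2^n) (2^n)"
    using assms unfolding density_op_def hermitian_on_def by auto
  from tr_lin[OF this] show ?thesis
    unfolding noisy_cost_def depol_state_def cost_def by simp
qed
theorem proposition1:
  fixes n L :: nat
    and Ob :: "complex mat"
    and \<rho> :: "'p \<Rightarrow> complex mat"
    and p a1 A B D E c :: real
    and Var_noisy :: "'p \<Rightarrow> real \<Rightarrow> real"
    and Var_mit :: "'p \<Rightarrow> real"
    and \<theta>1 \<theta>2 :: 'p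
  defines "Cm \<equiv> (\<lambda>\<theta>. (A * noisy_cost n L p (\<rho> \<theta>) Ob
                      - B * noisy_cost n L (a1 * p) (\<rho> \<theta>) Ob) / D + E)"
  assumes O_herm: "hermitian_on n Ob"
    and states: "\<And>\<theta>. density_op n (\<rho> \<theta>)"
    and p_range: "0 \<le> p" "p < 1"
    and a1: "a1 > 1" "a1 * p \<le> 1"
    and D_nz: "D \<noteq> 0"
    and B_nz: "B \<noteq> 0"
    and c_def: "c = A / B"
    and var_pos: "\<And>\<theta>. Var_noisy \<theta> p > 0"
    and var_mit: "\<And>\<theta>. Var_mit \<theta> =
                     (A^2 * Var_noisy \<theta> p + B^2 * Var_noisy \<theta> (a1 * p)) / D^2"
    and var_mono: "\<And>\<theta>. Var_noisy \<theta> (a1 * p) \<ge> Var_noisy \<theta> p"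
    and distinct: "cost (\<rho> \<theta>1) Ob \<noteq> cost (\<rho> \<theta>2) Ob"
  shows "\<forall>\<theta>\<in>{\<theta>1, \<theta>2}.
           (let \<chi> = rel_resolvability (mitigation_cost (Var_mit \<theta>) (Var_noisy \<theta> p))
                       (Cm \<theta>1 - Cm \<theta>2)
                       (noisy_cost n L p (\<rho> \<theta>1) Ob - noisy_cost n L p (\<rho> \<theta>2) Ob)
            in \<chi> \<le> (c - (1 - a1 * p) ^ L / (1 - p) ^ L)^2 / (c^2 + 1)
               \<and> ((c = a1
                   \<or> (\<exists>(r :: real \<Rightarrow> real) (t :: real \<Rightarrow> real) (\<epsilon> :: real).
                         (\<forall>x. r x > 0 \<and> t x > 0) \<and>
                         c = a1 * r \<epsilon> powr t \<epsilon> / r (a1 * \<epsilon>) powr t (a1 * \<epsilon>))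
                   \<or> c = inverse (a1 ^ (L + 1)))
                  \<longrightarrow> \<chi> \<le> 1))"
proof (intro ballI)
  fix \<theta> assume th: "\<theta> \<in> {\<theta>1, \<theta>2}"
  define X where "X = cost (\<rho> \<theta>1) Ob - cost (\<rho> \<theta>2) Ob"
  define u where "u = (1 - p) ^ L"
  define v where "v = (1 - a1 * p) ^ L"
  define q where "q = v / u"
  define V where "V = Var_noisy \<theta> p"
  define W where "W = Var_noisy \<theta> (a1 * p)"
  have X0: "X \<noteq> 0" using distinct X_def by simp
  have u0: "u > 0" using p_range u_def by simp
  have v0: "v \<ge> 0" using a1 v_def by simp
  have vu: "v \<le> u" unfolding u_def v_def
  proof (intro power_mono)
    have "p \<le> a1 * p" using a1 p_range by (simp add: mult_le_cancel_right1)
    thus "1 - a1 * p \<le> 1 - p" by simp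
    show "0 \<le> 1 - a1 * p" using a1 by simp
  qed
  have q01: "0 \<le> q" "q \<le> 1" using u0 v0 vu q_def by auto
  have V0: "V > 0" using var_pos V_def by simp
  have WV: "W \<ge> V" using var_mono V_def W_def by simp
  have A_eq: "A = c * B" using c_def B_nz by simp
  have dCt: "noisy_cost n L p (\<rho> \<theta>1) Ob - noisy_cost n L p (\<rho> \<theta>2) Ob = u * X"
    using cost_lin[OF states O_herm] unfolding u_def X_def by (simp add: algebra_simps)
  have dCt2: "noisy_cost n L (a1*p) (\<rho> \<theta>1) Ob - noisy_cost n L (a1*p) (\<rho> \<theta>2) Ob = v * X"
    using cost_lin[OF states O_herm] unfolding v_def X_def by (simp add: algebra_simps)
  have dCm: "Cm \<theta>1 - Cm \<theta>2 = (A * (u * X) - B * (v * X)) / D"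
    unfolding Cm_def using dCt dCt2 by (simp add: diff_divide_distrib[symmetric] algebra_simps)
  have ratio: "(Cm \<theta>1 - Cm \<theta>2) / (u * X) = B * (c - q) / D"
    unfolding dCm A_eq q_def using u0 X0 D_nz by (simp add: field_simps)
  have gam: "mitigation_cost (Var_mit \<theta>) (Var_noisy \<theta> p) = B^2 * (c^2 * V + W) / (D^2 * V)"
    unfolding mitigation_cost_def var_mit V_def[symmetric] W_def[symmetric] A_eq
    by (simp add: field_simps power_mult_distrib)
  have den: "c^2 * V + W > 0" using V0 WV by (smt (verit) zero_le_power2 mult_nonneg_nonneg)
  define \<chi> where "\<chi> = rel_resolvability (mitigation_cost (Var_mit \<theta>) (Var_noisy \<theta> p))
                       (Cm \<theta>1 - Cm \<theta>2)
                       (noisy_cost n L p (\<rho> \<theta>1) Ob - noisy_cost n L p (\<rho> \<theta>2) Ob)"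
  have chi: "\<chi> = V * (c - q)^2 / (c^2 * V + W)"
  proof -
    have e1: "(B * (c - q) / D)^2 = B^2 * (c - q)^2 / D^2" by (simp add: power_divide power_mult_distrib)
    have e2: "1 / (B^2 * (c^2 * V + W) / (D^2 * V)) = D^2 * V / (B^2 * (c^2 * V + W))" by simp
    have e3: "D^2 * V / (B^2 * (c^2 * V + W)) * (B^2 * (c - q)^2 / D^2)
        = (B^2 * D^2) * (V * (c - q)^2) / ((B^2 * D^2) * (c^2 * V + W))" by (simp add: ac_simps)
    also have "\<dots> = V * (c - q)^2 / (c^2 * V + W)" using B_nz D_nz by (intro mult_divide_mult_cancel_left) simp
    finally show ?thesis unfolding \<chi>_def rel_resolvability_def gam dCt ratio e1 e2 .
  qed
  have b1: "\<chi> \<le> (c - q)^2 / (c^2 + 1)"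
  proof -
    have "V * (c - q)^2 / (c^2 * V + W) \<le> V * (c - q)^2 / (c^2 * V + V)"
    proof (rule divide_left_mono)
      show "c^2 * V + V \<le> c^2 * V + W" using WV by simp
      show "0 \<le> V * (c - q)^2" using V0 by simp
      have "0 < c^2 * V + V" using V0 by (simp add: add_nonneg_pos)
      thus "0 < (c^2 * V + W) * (c^2 * V + V)" using den by simp
    qed
    also have "\<dots> = V * (c - q)^2 / (V * (c^2 + 1))" by (simp add: algebra_simps)
    also have "\<dots> = (c - q)^2 / (c^2 + 1)" using V0 by (intro mult_divide_mult_cancel_left) simp
    finally show ?thesis using chi by simp
  qed
  have b2: "\<chi> \<le> 1" if cpos: "c > 0"
  proof -
    have "(c - q)^2 \<le> c^2 + 1" using q01 cpos
      by (simp add: power2_eq_square algebra_simps) (smt (verit) mult_nonneg_nonneg mult_le_one)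
    moreover have "c^2 + 1 > 0" by (simp add: add_nonneg_pos)
    ultimately have "(c - q)^2 / (c^2 + 1) \<le> 1" by simp
    thus ?thesis using b1 by simp
  qed
  have cases: "c > 0" if "c = a1
                   \<or> (\<exists>(r :: real \<Rightarrow> real) (t :: real \<Rightarrow> real) (\<epsilon> :: real).
                         (\<forall>x. r x > 0 \<and> t x > 0) \<and>
                         c = a1 * r \<epsilon> powr t \<epsilon> / r (a1 * \<epsilon>) powr t (a1 * \<epsilon>))
                   \<or> c = inverse (a1 ^ (L + 1))"
    using that a1 by (auto intro!: divide_pos_pos mult_pos_pos simp: powr_gt_zero) (metis less_irrefl)+
  show "let \<chi> = rel_resolvability (mitigation_cost (Var_mit \<theta>) (Var_noisy \<theta> p))
                       (Cm \<theta>1 - Cm \<theta>2)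
                       (noisy_cost n L p (\<rho> \<theta>1) Ob - noisy_cost n L p (\<rho> \<theta>2) Ob)
            in \<chi> \<le> (c - (1 - a1 * p) ^ L / (1 - p) ^ L)^2 / (c^2 + 1)
               \<and> ((c = a1
                   \<or> (\<exists>(r :: real \<Rightarrow> real) (t :: real \<Rightarrow> real) (\<epsilon> :: real).
                         (\<forall>x. r x > 0 \<and> t x > 0) \<and>
                         c = a1 * r \<epsilon> powr t \<epsilon> / r (a1 * \<epsilon>) powr t (a1 * \<epsilon>))
                   \<or> c = inverse (a1 ^ (L + 1)))
                  \<longrightarrow> \<chi> \<le> 1)"
    unfolding Let_def \<chi>_def[symmetric] using b1 b2 cases unfolding q_def u_def v_def by blast
qed

end
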